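(* Assume $CA_2$. Then ccc is not productive: there are partial orders $\mathbb P$ and $\mathbb Q$, each satisfying the countable chain condition, such that $\mathbb P\times\mathbb Q$ does not satisfy the countable chain condition.
   Context: A type is a sequence $\tau=\{(m_k,n_{k+1},r_{k+1})\}_{k\in\omega}$ of natural numbers with $m_0=1$; $n_k\ge2$ for $k\ge1$; every $r\in\omega$ equals $r_k$ for infinitely many $k$; $m_k>r_{k+1}$; and $m_{k+1}=r_{k+1}+(m_k-r_{k+1})n_{k+1}$ for all $k$. For a set of ordinals $X$ and $\mathcal F\subseteq[X]^{<\omega}$, $\mathcal F_k$ is the set of elements of rank $k$ in $(\mathcal F,\subsetneq)$; $A\sqsubseteq B$ means $A\subseteq B$ and every element of $B$ below an element of $A$ is in $A$; $A<B$ means every element of $A$ is below every element of $B$. $\mathcal F$ is a construction scheme over $X$ of type $\tau$ if (1) every finite subset of $X$ lies in a member of $\mathcal F$; (2) $|F|=m_k$ for $F\in\mathcal F_k$; (3) $E\cap F\sqsubseteq E,F$ for $E,F\in\mathcal F_k$; (4) each $F\in\mathcal F_{k+1}$ is the union of uniquely determined $F_0,\dots,F_{n_{k+1}-1}\in\mathcal F_k$ forming a $\Delta$-system with root $R(F)$, $|R(F)|=r_{k+1}$, $R(F)<F_0\setminus R(F)<\dots<F_{n_{k+1}-1}\setminus R(F)$. For a construction scheme $\mathcal F$ over $\omega_1$, $l\ge1$, $F\in\mathcal F_l$ and finite $\mathcal C\subseteq[\omega_1]^{<\omega}$: $F$ captures $\mathcal C$ if $|\mathcal C|\le n_l$ and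 $\mathcal C$ can be enumerated as $\{c_i\}_{i<|\mathcal C|}$ with $c_i\subseteq F_i$, $c_i\setminus R(F)\neq\emptyset$ and $\phi_i[c_0]=c_i$ where $\phi_i:F_0\to F_i$ is the increasing bijection. $\mathcal F$ is $n$-capturing if for every uncountable $S\subseteq[\omega_1]^{<\omega}$ and every $k\in\omega$ there are $\mathcal C\in[S]^n$, $l>k$ and $F\in\mathcal F_l$ capturing $\mathcal C$. $CA_n$ is the statement: for every type $\tau$ with $n\le n_k$ for all $k\ge1$ there is an $n$-capturing construction scheme over $\omega_1$ of type $\tau$. *)

theory Defs
  imports Main "HOL-Library.Countable_Set"
begin

text \<open>A well-ordered type is omega_1-like if it is uncountable and every proper
initial segment is countable; such a type is order-isomorphic to omega_1.\<close>
definition omega1_type :: "'a::wellorder itself \<Rightarrow> bool" where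
  "omega1_type _ \<longleftrightarrow> uncountable (UNIV::'a set) \<and> (\<forall>x::'a. countable {y. y < x})"

text \<open>The type tau = ((m k, n (k+1), r (k+1)))_k is given by three sequences;
the values n 0 and r 0 are irrelevant.\<close>
definition is_type :: "(nat \<Rightarrow> nat) \<Rightarrow> (nat \<Rightarrow> nat) \<Rightarrow> (nat \<Rightarrow> nat) \<Rightarrow> bool" where
  "is_type m n r \<longleftrightarrow>
     m 0 = 1 \<and>
     (\<forall>k\<ge>1. 2 \<le> n k) \<and>
     (\<forall>x. infinite {k. 1 \<le> k \<and> r k = x}) \<and>
     (\<forall>k. r (Suc k) < m k) \<and>
     (\<forall>k. m (Suc k) = r (Suc k) + (m k - r (Suc k)) * n (Suc k))"

definition initial_in :: "'a::linorder set \<Rightarrow> 'a set \<Rightarrow> bool" where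
  "initial_in A B \<longleftrightarrow> A \<subseteq> B \<and> (\<forall>b\<in>B. \<forall>a\<in>A. b < a \<longrightarrow> b \<in> A)"

definition set_less :: "'a::linorder set \<Rightarrow> 'a set \<Rightarrow> bool" where
  "set_less A B \<longleftrightarrow> (\<forall>a\<in>A. \<forall>b\<in>B. a < b)"

definition scheme_rank :: "'a set set \<Rightarrow> 'a set \<Rightarrow> nat" where
  "scheme_rank \<F> x = Max {length c | c. c \<noteq> [] \<and> sorted_wrt (\<lambda>a b. a \<subset> b) c \<and> set c \<subseteq> \<F> \<and> last c = x} - 1"

definition level :: "'a set set \<Rightarrow> nat \<Rightarrow> 'a set set" where
  "level \<F> k = {x \<in> \<F>. scheme_rank \<F> x = k}"

definition root_of :: "'a set list \<Rightarrow> 'a set" where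
  "root_of Fs = Fs ! 0 \<inter> Fs ! 1"

text \<open>Fs = [F_0,...,F_{n(k+1)-1}] is a decomposition of F (of rank k+1) into
elements of rank k forming an increasing Delta-system with root R(F) of size r(k+1).\<close>
definition decomp :: "(nat \<Rightarrow> nat) \<Rightarrow> (nat \<Rightarrow> nat) \<Rightarrow> 'a::linorder set set \<Rightarrow> nat \<Rightarrow> 'a set \<Rightarrow> 'a set list \<Rightarrow> bool" where
  "decomp n r \<F> k F Fs \<longleftrightarrow>
     length Fs = n (Suc k) \<and>
     set Fs \<subseteq> level \<F> k \<and>
     \<Union>(set Fs) = F \<and>
     (\<forall>i j. i < j \<and> j < length Fs \<longrightarrow> Fs ! i \<inter> Fs ! j = root_of Fs) \<and>
     card (root_of Fs) = r (Suc k) \<and>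
     set_less (root_of Fs) (Fs ! 0 - root_of Fs) \<and>
     (\<forall>i. Suc i < length Fs \<longrightarrow> set_less (Fs ! i - root_of Fs) (Fs ! Suc i - root_of Fs))"

definition construction_scheme ::
  "'a::linorder set \<Rightarrow> (nat \<Rightarrow> nat) \<Rightarrow> (nat \<Rightarrow> nat) \<Rightarrow> (nat \<Rightarrow> nat) \<Rightarrow> 'a set set \<Rightarrow> bool" where
  "construction_scheme X m n r \<F> \<longleftrightarrow>
     \<F> \<subseteq> {A. A \<subseteq> X \<and> finite A} \<and>
     (\<forall>A. A \<subseteq> X \<and> finite A \<longrightarrow> (\<exists>F\<in>\<F>. A \<subseteq> F)) \<and>
     (\<forall>k. \<forall>F\<in>level \<F> k. card F = m k) \<and>
     (\<forall>k. \<forall>E\<in>level \<F> k. \<forall>F\<in>level \<F> k. initial_in (E \<inter> F) E \<and> initial_in (E \<inter> F) F) \<and>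
     (\<forall>k. \<forall>F\<in>level \<F> (Suc k). \<exists>!Fs. decomp n r \<F> k F Fs)"

definition pieces :: "(nat \<Rightarrow> nat) \<Rightarrow> (nat \<Rightarrow> nat) \<Rightarrow> 'a::linorder set set \<Rightarrow> nat \<Rightarrow> 'a set \<Rightarrow> 'a set list" where
  "pieces n r \<F> l F = (THE Fs. decomp n r \<F> (l - 1) F Fs)"

definition captures ::
  "(nat \<Rightarrow> nat) \<Rightarrow> (nat \<Rightarrow> nat) \<Rightarrow> 'a::linorder set set \<Rightarrow> nat \<Rightarrow> 'a set \<Rightarrow> 'a set set \<Rightarrow> bool" where
  "captures n r \<F> l F C \<longleftrightarrow>
     (let Fs = pieces n r \<F> l F; R = root_of Fs in
       1 \<le> l \<and> F \<in> level \<F> l \<and> finite C \<and> card C \<le> n l \<and>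
       (\<exists>c. bij_betw c {..<card C} C \<and>
          (\<forall>i<card C. c i \<subseteq> Fs ! i \<and> c i - R \<noteq> {} \<and>
             (\<exists>\<phi>. bij_betw \<phi> (Fs ! 0) (Fs ! i) \<and> strict_mono_on (Fs ! 0) \<phi> \<and> \<phi> ` (c 0) = c i))))"

definition capturing :: "nat \<Rightarrow> (nat \<Rightarrow> nat) \<Rightarrow> (nat \<Rightarrow> nat) \<Rightarrow> 'a::linorder set set \<Rightarrow> bool" where
  "capturing N n r \<F> \<longleftrightarrow>
     (\<forall>S. S \<subseteq> {A. finite A} \<and> uncountable S \<longrightarrow>
        (\<forall>k. \<exists>C l F. C \<subseteq> S \<and> finite C \<and> card C = N \<and> k < l \<and> F \<in> level \<F> l \<and> captures n r \<F> l F C))"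

definition CA :: "nat \<Rightarrow> 'a::wellorder itself \<Rightarrow> bool" where
  "CA N _ \<longleftrightarrow>
     (\<forall>m n r. is_type m n r \<and> (\<forall>k\<ge>1. N \<le> n k) \<longrightarrow>
        (\<exists>\<F>::'a set set. construction_scheme UNIV m n r \<F> \<and> capturing N n r \<F>))"

definition is_poset :: "'b set \<Rightarrow> ('b \<Rightarrow> 'b \<Rightarrow> bool) \<Rightarrow> bool" where
  "is_poset P le \<longleftrightarrow> (\<forall>p\<in>P. le p p) \<and>
     (\<forall>p\<in>P. \<forall>q\<in>P. le p q \<and> le q p \<longrightarrow> p = q) \<and>
     (\<forall>p\<in>P. \<forall>q\<in>P. \<forall>s\<in>P. le p q \<and> le q s \<longrightarrow> le p s)"

definition compatible :: "'b set \<Rightarrow> ('b \<Rightarrow> 'b \<Rightarrow> bool) \<Rightarrow> 'b \<Rightarrow> 'b \<Rightarrow> bool" where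
  "compatible P le p q \<longleftrightarrow> (\<exists>s\<in>P. le s p \<and> le s q)"

definition antichain :: "'b set \<Rightarrow> ('b \<Rightarrow> 'b \<Rightarrow> bool) \<Rightarrow> 'b set \<Rightarrow> bool" where
  "antichain P le A \<longleftrightarrow> A \<subseteq> P \<and> (\<forall>p\<in>A. \<forall>q\<in>A. p \<noteq> q \<longrightarrow> \<not> compatible P le p q)"

definition ccc :: "'b set \<Rightarrow> ('b \<Rightarrow> 'b \<Rightarrow> bool) \<Rightarrow> bool" where
  "ccc P le \<longleftrightarrow> (\<forall>A. antichain P le A \<longrightarrow> countable A)"

definition prod_le :: "('b \<Rightarrow> 'b \<Rightarrow> bool) \<Rightarrow> ('c \<Rightarrow> 'c \<Rightarrow> bool) \<Rightarrow> 'b \<times> 'c \<Rightarrow> 'b \<times> 'c \<Rightarrow> bool" where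
  "prod_le le1 le2 x y \<longleftrightarrow> le1 (fst x) (fst y) \<and> le2 (snd x) (snd y)"

end

theory Submission
  imports Defs
begin



definition rr :: "nat \<Rightarrow> nat" where "rr k = fst (prod_decode (k - 1))"

primrec mm :: "nat \<Rightarrow> nat" where
  "mm 0 = 1"
| "mm (Suc k) = rr (Suc k) + (mm k - rr (Suc k)) * 2"

lemma rr_le: "rr (Suc k) \<le> k"
proof -
  have "rr (Suc k) = fst (prod_decode k)" by (simp add: rr_def)
  also have "\<dots> \<le> prod_encode (prod_decode k)"
    by (metis le_prod_encode_1 prod.collapse)
  also have "\<dots> = k" by simp
  finally show ?thesis .
qed

lemma mm_ge: "Suc k \<le> mm k"
proof (induction k)
  case 0 then show ?case by simp
next
  case (Suc k)
  have "rr (Suc k) \<le> k" by (rule rr_le)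
  then show ?case using Suc by simp
qed

lemma rr_lt: "rr (Suc k) < mm k" using rr_le[of k] mm_ge[of k] by simp

lemma rr_inf: "infinite {k. 1 \<le> k \<and> rr k = x}"
proof -
  have "range (\<lambda>b. Suc (prod_encode (x, b))) \<subseteq> {k. 1 \<le> k \<and> rr k = x}"
    by (auto simp: rr_def)
  moreover have "infinite (range (\<lambda>b. Suc (prod_encode (x, b))))"
    by (rule range_inj_infinite) (auto simp: inj_def)
  ultimately show ?thesis using infinite_super by blast
qed

lemma type_ok: "is_type mm (\<lambda>_. 2) rr"
  unfolding is_type_def using rr_lt rr_inf by auto

definition pos :: "'a::linorder \<Rightarrow> 'a set \<Rightarrow> nat" where "pos x A = card {y\<in>A. y < x}"

lemma pos_mono: "finite A \<Longrightarrow> x \<in> A \<Longrightarrow> y \<in> A \<Longrightarrow> x < y \<Longrightarrow> pos x A < pos y A"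
  unfolding pos_def by (rule psubset_card_mono) auto

lemma pos_bij:
  assumes "strict_mono_on A f" "bij_betw f A B" "x \<in> A"
  shows "pos (f x) B = pos x A"
proof -
  have "{z\<in>B. z < f x} = f ` {y\<in>A. y < x}"
  proof
    show "f ` {y\<in>A. y<x} \<subseteq> {z\<in>B. z < f x}"
      using assms by (auto simp: bij_betw_def intro: strict_mono_onD)
    show "{z\<in>B. z < f x} \<subseteq> f ` {y\<in>A. y<x}"
    proof
      fix z assume z: "z \<in> {z\<in>B. z < f x}"
      then obtain y where y: "y \<in> A" "z = f y" using assms(2) by (auto simp: bij_betw_def)
      have "y < x"
      proof (rule ccontr)
        assume "\<not> y < x"
        then have "y = x \<or> x < y" by auto
        then show False using z y assms(1,3) strict_mono_onD[OF assms(1), of x y] by auto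
      qed
      then show "z \<in> f ` {y\<in>A. y<x}" using y by auto
    qed
  qed
  moreover have "inj_on f {y\<in>A. y<x}" using assms(2) by (auto simp: bij_betw_def intro: inj_on_subset)
  ultimately show ?thesis unfolding pos_def by (simp add: card_image)
qed

lemma pos_in: "finite u \<Longrightarrow> set_less u v \<Longrightarrow> x \<in> u \<Longrightarrow> pos x (u \<union> v) < card u"
  unfolding pos_def set_less_def
  by (rule psubset_card_mono) (auto dest: less_asym)

lemma pos_out: "finite u \<Longrightarrow> finite v \<Longrightarrow> set_less u v \<Longrightarrow> x \<in> v \<Longrightarrow> card u \<le> pos x (u \<union> v)"
  unfolding pos_def set_less_def
  by (rule card_mono) auto

lemma split_map:
  assumes fin: "finite u0" "finite v0" "finite u1" "finite v1"
    and sm: "strict_mono_on (u0 \<union> v0) f" and im: "f ` (u0 \<union> v0) = u1 \<union> v1"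
    and l0: "set_less u0 v0" and l1: "set_less u1 v1" and c: "card u0 = card u1"
  shows "f ` u0 = u1" "f ` v0 = v1"
proof -
  have bij: "bij_betw f (u0 \<union> v0) (u1 \<union> v1)"
    using strict_mono_on_imp_inj_on[OF sm] im by (simp add: bij_betw_def)
  have d0: "u0 \<inter> v0 = {}" and d1: "u1 \<inter> v1 = {}" using l0 l1 by (auto simp: set_less_def)
  have key: "x \<in> u0 \<longleftrightarrow> f x \<in> u1" if x: "x \<in> u0 \<union> v0" for x
  proof -
    have p: "pos (f x) (u1 \<union> v1) = pos x (u0 \<union> v0)" by (rule pos_bij[OF sm bij x])
    have fx: "f x \<in> u1 \<union> v1" using im x by auto
    have "x \<in> u0 \<longleftrightarrow> pos x (u0 \<union> v0) < card u0"
      using x pos_in[OF fin(1) l0, of x] pos_out[OF fin(1,2) l0, of x] by auto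
    moreover have "f x \<in> u1 \<longleftrightarrow> pos (f x) (u1 \<union> v1) < card u1"
      using fx pos_in[OF fin(3) l1, of "f x"] pos_out[OF fin(3,4) l1, of "f x"] by auto
    ultimately show ?thesis using p c by simp
  qed
  show "f ` u0 = u1"
  proof
    show "f ` u0 \<subseteq> u1" using key by auto
    show "u1 \<subseteq> f ` u0"
    proof
      fix y assume "y \<in> u1"
      then obtain x where "x \<in> u0 \<union> v0" "y = f x" using im by (metis UnI1 imageE)
      then show "y \<in> f ` u0" using key \<open>y \<in> u1\<close> by auto
    qed
  qed
  show "f ` v0 = v1"
  proof
    show "f ` v0 \<subseteq> v1"
    proof
      fix y assume "y \<in> f ` v0"
      then obtain x where x: "x \<in> v0" "y = f x" by auto
      then have "x \<notin> u0" using d0 by auto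
      then have "f x \<notin> u1" using key x by auto
      moreover have "f x \<in> u1 \<union> v1" using im x by auto
      ultimately show "y \<in> v1" using x by auto
    qed
    show "v1 \<subseteq> f ` v0"
    proof
      fix y assume y: "y \<in> v1"
      then obtain x where x: "x \<in> u0 \<union> v0" "y = f x" using im by (metis UnI2 imageE)
      have "y \<notin> u1" using y d1 by auto
      then have "x \<notin> u0" using key x by auto
      then show "y \<in> f ` v0" using x by auto
    qed
  qed
qed




definition pdisj :: "'a set set \<Rightarrow> bool" where
  "pdisj S \<longleftrightarrow> (\<forall>s\<in>S. \<forall>s'\<in>S. s \<noteq> s' \<longrightarrow> s \<inter> s' = {})"

lemma G0:
  assumes "\<forall>z. countable {t\<in>T. z \<in> t}" "countable Z"
  shows "countable {t\<in>T. t \<inter> Z \<noteq> {}}"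
proof -
  have "{t\<in>T. t \<inter> Z \<noteq> {}} = (\<Union>z\<in>Z. {t\<in>T. z\<in>t})" by auto
  then show ?thesis using assms by simp
qed

lemma pdisj_pc: "pdisj T \<Longrightarrow> countable {t\<in>T. z \<in> t}"
proof (cases "\<exists>t0\<in>T. z \<in> t0")
  case True
  assume d: "pdisj T"
  then obtain t0 where t0: "t0 \<in> T" "z \<in> t0" using True by auto
  have "{t\<in>T. z \<in> t} \<subseteq> {t0}" using d t0 unfolding pdisj_def by blast
  then show ?thesis by (rule countable_subset) simp
next
  case False
  then have e: "{t\<in>T. z \<in> t} = {}" by auto
  show ?thesis unfolding e by simp
qed

lemma pigeon:
  assumes "uncountable A"
  shows "\<exists>k. uncountable {a\<in>A. card a = k}"
proof (rule ccontr)
  assume "\<not> ?thesis"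
  then have "countable (\<Union>k. {a\<in>A. card a = k})" by auto
  moreover have "(\<Union>k. {a\<in>A. card a = k}) = A" by auto
  ultimately show False using assms by simp
qed

lemma disj_sub:
  assumes unc: "uncountable T" and fin: "\<forall>t\<in>T. finite t" and pc: "\<forall>z. countable {t\<in>T. z\<in>t}"
  shows "\<exists>S\<subseteq>T. uncountable S \<and> pdisj S"
proof -
  define D where "D = {M. M \<subseteq> T \<and> pdisj M}"
  have "\<exists>M\<in>D. \<forall>X\<in>D. M \<subseteq> X \<longrightarrow> X = M"
  proof (rule Zorn_Lemma, rule ballI)
    fix C assume C: "C \<in> chains D"
    then have CD: "C \<subseteq> D" and ch: "\<forall>A\<in>C. \<forall>B\<in>C. A \<subseteq> B \<or> B \<subseteq> A"
      unfolding chains_def chain_subset_def by auto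
    show "\<Union>C \<in> D" unfolding D_def pdisj_def
    proof (intro CollectI conjI ballI impI)
      show "\<Union>C \<subseteq> T" using CD by (auto simp: D_def)
    next
      fix s s' assume s: "s \<in> \<Union>C" and s': "s' \<in> \<Union>C" and ne: "s \<noteq> s'"
      then obtain A B where AB: "A \<in> C" "B \<in> C" "s \<in> A" "s' \<in> B" by auto
      show "s \<inter> s' = {}"
      proof (cases "A \<subseteq> B")
        case True
        then have "pdisj B" "s \<in> B" using AB CD by (auto simp: D_def)
        then show ?thesis using AB ne by (auto simp: pdisj_def)
      next
        case False
        then have "B \<subseteq> A" using ch AB by blast
        then have "pdisj A" "s' \<in> A" using AB CD by (auto simp: D_def)
        then show ?thesis using AB ne by (auto simp: pdisj_def)
      qed
    qed
  qed
  then obtain M where M: "M \<subseteq> T" "pdisj M" and max: "\<forall>X\<in>D. M \<subseteq> X \<longrightarrow> X = M"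
    by (auto simp: D_def)
  have "uncountable M"
  proof
    assume cM: "countable M"
    have "\<And>m. m \<in> M \<Longrightarrow> countable m" using M fin by (auto intro: countable_finite)
    then have "countable (\<Union>m\<in>M. m)" by (rule countable_UN[OF cM])
    then have "countable (\<Union>M)" by simp
    then have cB: "countable {t\<in>T. t \<inter> \<Union>M \<noteq> {}}" using G0 pc by blast
    have "\<not> T \<subseteq> {t\<in>T. t \<inter> \<Union>M \<noteq> {}} \<union> M"
    proof
      assume "T \<subseteq> {t\<in>T. t \<inter> \<Union>M \<noteq> {}} \<union> M"
      then have "countable T" using cB cM by (meson countable_Un countable_subset)
      then show False using unc by simp
    qed
    then obtain t where t: "t \<in> T" "t \<inter> \<Union>M = {}" "t \<notin> M" by auto
    have "insert t M \<in> D" using t M unfolding D_def pdisj_def by auto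
    then have "insert t M = M" using max by auto
    then show False using t by auto
  qed
  then show ?thesis using M by auto
qed

lemma delta:
  "\<forall>A::'a set set. (\<forall>a\<in>A. finite a \<and> card a = k) \<longrightarrow> uncountable A \<longrightarrow>
     (\<exists>D A'. A' \<subseteq> A \<and> uncountable A' \<and> (\<forall>a\<in>A'. \<forall>b\<in>A'. a \<noteq> b \<longrightarrow> a \<inter> b = D))"
proof (induction k)
  case 0
  show ?case
  proof (intro allI impI)
    fix A :: "'a set set" assume a: "\<forall>a\<in>A. finite a \<and> card a = 0" and u: "uncountable A"
    have "A \<subseteq> {{}}" using a by auto
    then have "countable A" by (rule countable_subset) simp
    then show "\<exists>D A'. A' \<subseteq> A \<and> uncountable A' \<and> (\<forall>a\<in>A'. \<forall>b\<in>A'. a \<noteq> b \<longrightarrow> a \<inter> b = D)"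
      using u by simp
  qed
next
  case (Suc k)
  show ?case
  proof (intro allI impI)
    fix A :: "'a set set" assume a: "\<forall>a\<in>A. finite a \<and> card a = Suc k" and u: "uncountable A"
    show "\<exists>D A'. A' \<subseteq> A \<and> uncountable A' \<and> (\<forall>a\<in>A'. \<forall>b\<in>A'. a \<noteq> b \<longrightarrow> a \<inter> b = D)"
    proof (cases "\<exists>z. uncountable {a\<in>A. z \<in> a}")
      case True
      then obtain z where z: "uncountable {a\<in>A. z \<in> a}" by auto
      define Az where "Az = (\<lambda>a. a - {z}) ` {a\<in>A. z \<in> a}"
      have inj: "inj_on (\<lambda>a. a - {z}) {a\<in>A. z \<in> a}"
      proof (rule inj_onI)
        fix a a' assume "a \<in> {a\<in>A. z \<in> a}" "a' \<in> {a\<in>A. z \<in> a}" "a - {z} = a' - {z}"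
        then have "z \<in> a" "z \<in> a'" "insert z (a - {z}) = insert z (a' - {z})" by auto
        then show "a = a'" by (simp add: insert_absorb)
      qed
      have uz: "uncountable Az" unfolding Az_def using z inj countable_image_inj_on by blast
      have az: "\<forall>b\<in>Az. finite b \<and> card b = k"
      proof
        fix b assume "b \<in> Az"
        then obtain a0 where a0: "a0 \<in> A" "z \<in> a0" "b = a0 - {z}" unfolding Az_def by auto
        then have "finite a0" "card a0 = Suc k" using a by auto
        then show "finite b \<and> card b = k" using a0 by simp
      qed
      have ex: "\<exists>D A'. A' \<subseteq> Az \<and> uncountable A' \<and> (\<forall>a\<in>A'. \<forall>b\<in>A'. a \<noteq> b \<longrightarrow> a \<inter> b = D)"
        using mp[OF mp[OF spec[OF Suc.IH, of Az] az] uz] .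
      obtain D' A'' where A'': "A'' \<subseteq> Az" "uncountable A''"
        "\<forall>a\<in>A''. \<forall>b\<in>A''. a \<noteq> b \<longrightarrow> a \<inter> b = D'"
        using ex by blast
      have zn: "\<forall>b\<in>A''. z \<notin> b" using A''(1) unfolding Az_def by auto
      have sub: "insert z ` A'' \<subseteq> A"
      proof
        fix c assume "c \<in> insert z ` A''"
        then obtain b where b: "b \<in> A''" "c = insert z b" by auto
        then have "b \<in> Az" using A''(1) by auto
        then obtain a0 where a0: "a0 \<in> A" "z \<in> a0" "b = a0 - {z}" unfolding Az_def by auto
        then have "c = a0" using b by (simp add: insert_absorb)
        then show "c \<in> A" using a0 by simp
      qed
      have inj2: "inj_on (insert z) A''"
        by (rule inj_onI) (metis zn Diff_insert_absorb)
      have "uncountable (insert z ` A'')" using A''(2) inj2 countable_image_inj_on by blast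
      moreover have "\<forall>a\<in>insert z ` A''. \<forall>b\<in>insert z ` A''. a \<noteq> b \<longrightarrow> a \<inter> b = insert z D'"
      proof (intro ballI impI)
        fix a b assume "a \<in> insert z ` A''" "b \<in> insert z ` A''" "a \<noteq> b"
        then obtain a' b' where "a' \<in> A''" "b' \<in> A''" "a = insert z a'" "b = insert z b'" "a' \<noteq> b'" by auto
        then show "a \<inter> b = insert z D'" using A''(3) by auto
      qed
      ultimately show ?thesis using sub by (intro exI[of _ "insert z D'"] exI[of _ "insert z ` A''"]) simp
    next
      case False
      then have pc: "\<forall>z. countable {a\<in>A. z \<in> a}" by auto
      obtain S where "S \<subseteq> A" "uncountable S" "pdisj S" using disj_sub[OF u _ pc] a by auto
      then show ?thesis unfolding pdisj_def by (intro exI[of _ "{}"] exI[of _ S]) simp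
    qed
  qed
qed

lemma above:
  fixes T :: "'a::wellorder set set"
  assumes om: "\<forall>x::'a::wellorder. countable {y. y < x}"
    and unc: "uncountable T" and dj: "pdisj T" and fin: "finite u"
  shows "\<exists>v\<in>T. set_less u v"
proof -
  define Z where "Z = (\<Union>w\<in>u. {z. z \<le> w})"
  have "\<forall>w::'a. countable {z. z \<le> w}"
  proof
    fix w :: 'a
    have "{z. z \<le> w} = insert w {z. z < w}" by auto
    then show "countable {z. z \<le> w}" using om by simp
  qed
  then have cZ: "countable Z" unfolding Z_def using fin by (auto intro: countable_finite)
  have "countable {t\<in>T. t \<inter> Z \<noteq> {}}" using G0 cZ pdisj_pc[OF dj] by blast
  then have "\<not> T \<subseteq> {t\<in>T. t \<inter> Z \<noteq> {}}" using unc countable_subset by blast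
  then obtain v where v: "v \<in> T" "v \<inter> Z = {}" by auto
  have "set_less u v" unfolding set_less_def
  proof (intro ballI)
    fix w x assume "w \<in> u" "x \<in> v"
    then have "\<not> x \<le> w" using v unfolding Z_def by auto
    then show "w < x" by simp
  qed
  then show ?thesis using v by auto
qed

lemma pairs:
  fixes T :: "'a::wellorder set set"
  assumes om: "\<forall>x::'a::wellorder. countable {y. y < x}"
    and unc: "uncountable T" and dj: "pdisj T" and fin: "\<forall>t\<in>T. finite t" and ne: "\<forall>t\<in>T. t \<noteq> {}"
  shows "\<exists>g. (\<forall>u\<in>T. g u \<in> T \<and> set_less u (g u)) \<and>
           (\<exists>S \<subseteq> (\<lambda>u. u \<union> g u) ` T. uncountable S \<and> pdisj S)"
proof -
  define g where "g u = (SOME v. v \<in> T \<and> set_less u v)" for u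
  have g: "\<forall>u\<in>T. g u \<in> T \<and> set_less u (g u)"
  proof
    fix u assume "u \<in> T"
    then have "\<exists>v. v \<in> T \<and> set_less u v" using above[OF om unc dj] fin by auto
    then show "g u \<in> T \<and> set_less u (g u)" unfolding g_def by (rule someI_ex)
  qed
  define T2 where "T2 = (\<lambda>u. u \<union> g u) ` T"
  have inj: "inj_on (\<lambda>u. u \<union> g u) T"
  proof (rule inj_onI, rule ccontr)
    fix u u' assume u: "u \<in> T" and u': "u' \<in> T" and eq: "u \<union> g u = u' \<union> g u'" and ne': "u \<noteq> u'"
    have d: "u \<inter> u' = {}" using dj u u' ne' unfolding pdisj_def by auto
    obtain x where x: "x \<in> u" using ne u by auto
    obtain x' where x': "x' \<in> u'" using ne u' by auto
    have "x \<in> g u'" using x d eq by auto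
    then have "x' < x" using g u' x' unfolding set_less_def by auto
    have "x' \<in> g u" using x' d eq by auto
    then have "x < x'" using g u x unfolding set_less_def by auto
    then show False using \<open>x' < x\<close> by simp
  qed
  have uT2: "uncountable T2" unfolding T2_def using unc inj countable_image_inj_on by blast
  have finT2: "\<forall>t\<in>T2. finite t" unfolding T2_def using fin g by auto
  have pcT: "\<forall>z. countable {t\<in>T. z \<in> t}" using pdisj_pc[OF dj] by auto
  have pc: "\<forall>z. countable {t\<in>T2. z \<in> t}"
  proof
    fix z
    have c1: "countable {t\<in>T. t \<inter> {z} \<noteq> {}}" by (rule G0[OF pcT]) simp
    have c2: "countable {t\<in>T. t \<inter> {y. y < z} \<noteq> {}}" by (rule G0[OF pcT]) (rule om[rule_format])
    have "{t\<in>T2. z \<in> t} \<subseteq> (\<lambda>u. u \<union> g u) ` ({t\<in>T. t \<inter> {z} \<noteq> {}} \<union> {t\<in>T. t \<inter> {y. y < z} \<noteq> {}})"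
    proof
      fix t assume "t \<in> {t\<in>T2. z \<in> t}"
      then obtain u where u: "u \<in> T" "t = u \<union> g u" "z \<in> u \<union> g u" unfolding T2_def by auto
      show "t \<in> (\<lambda>u. u \<union> g u) ` ({t\<in>T. t \<inter> {z} \<noteq> {}} \<union> {t\<in>T. t \<inter> {y. y < z} \<noteq> {}})"
      proof (cases "z \<in> u")
        case True then show ?thesis using u by auto
      next
        case False
        then have "z \<in> g u" using u by auto
        moreover obtain w where "w \<in> u" using ne u by auto
        ultimately have "w < z" using g u unfolding set_less_def by auto
        then have "u \<inter> {y. y < z} \<noteq> {}" using \<open>w \<in> u\<close> by auto
        then show ?thesis using u by auto
      qed
    qed
    moreover have "countable ((\<lambda>u. u \<union> g u) ` ({t\<in>T. t \<inter> {z} \<noteq> {}} \<union> {t\<in>T. t \<inter> {y. y < z} \<noteq> {}}))"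
      using c1 c2 by simp
    ultimately show "countable {t\<in>T2. z \<in> t}" using countable_subset by blast
  qed
  obtain S where S: "S \<subseteq> T2" "uncountable S" "pdisj S" using disj_sub[OF uT2 finT2 pc] by auto
  have "\<exists>S \<subseteq> (\<lambda>u. u \<union> g u) ` T. uncountable S \<and> pdisj S"
    using S unfolding T2_def by (intro exI[of _ S]) simp
  then show ?thesis using g by (intro exI[of _ g]) simp
qed




definition wit :: "bool \<Rightarrow> 'a::linorder set set \<Rightarrow> 'a \<Rightarrow> 'a \<Rightarrow> bool" where
  "wit b FF x y \<longleftrightarrow> (\<exists>k F. F \<in> level FF (Suc k) \<and>
     x \<in> pieces (\<lambda>_. 2) rr FF (Suc k) F ! 0 - root_of (pieces (\<lambda>_. 2) rr FF (Suc k) F) \<and>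
     y \<in> pieces (\<lambda>_. 2) rr FF (Suc k) F ! 1 - root_of (pieces (\<lambda>_. 2) rr FF (Suc k) F) \<and>
     (if b then pos x F + (mm k - rr (Suc k)) < pos y F
      else pos y F < pos x F + (mm k - rr (Suc k))))"

locale sch =
  fixes FF :: "'a::linorder set set"
  assumes cs: "construction_scheme UNIV mm (\<lambda>_. 2) rr FF"
begin

abbreviation "pc k F \<equiv> pieces (\<lambda>_. 2) rr FF (Suc k) F"

lemmas csd = cs[unfolded construction_scheme_def]

lemma lev_fin: "F \<in> level FF k \<Longrightarrow> finite F"
proof -
  assume "F \<in> level FF k"
  then have "F \<in> FF" by (simp add: level_def)
  then show "finite F" using csd[THEN conjunct1] by blast
qed

lemma lev_card: "F \<in> level FF k \<Longrightarrow> card F = mm k"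
  using csd[THEN conjunct2, THEN conjunct2, THEN conjunct1] by blast

lemma lev_init: "E \<in> level FF k \<Longrightarrow> F \<in> level FF k \<Longrightarrow> initial_in (E \<inter> F) E \<and> initial_in (E \<inter> F) F"
  using csd[THEN conjunct2, THEN conjunct2, THEN conjunct2, THEN conjunct1] by blast

lemma lev_decomp: "F \<in> level FF (Suc k) \<Longrightarrow> decomp (\<lambda>_. 2) rr FF k F (pc k F)"
proof -
  assume "F \<in> level FF (Suc k)"
  then have "\<exists>!Fs. decomp (\<lambda>_. 2) rr FF k F Fs"
    using csd[THEN conjunct2, THEN conjunct2, THEN conjunct2, THEN conjunct2] by blast
  then have "decomp (\<lambda>_. 2) rr FF k F (THE Fs. decomp (\<lambda>_. 2) rr FF k F Fs)" by (rule theI')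
  then show ?thesis unfolding pieces_def by simp
qed

lemma pc_facts:
  assumes "F \<in> level FF (Suc k)"
  shows "pc k F ! 0 \<in> level FF k" "pc k F ! 1 \<in> level FF k"
    "F = pc k F ! 0 \<union> pc k F ! 1" "root_of (pc k F) = pc k F ! 0 \<inter> pc k F ! 1"
    "card (root_of (pc k F)) = rr (Suc k)"
    "set_less (root_of (pc k F)) (pc k F ! 0 - root_of (pc k F))"
    "set_less (pc k F ! 0 - root_of (pc k F)) (pc k F ! 1 - root_of (pc k F))"
proof -
  define Fs where "Fs = pc k F"
  have d: "decomp (\<lambda>_. 2) rr FF k F Fs" unfolding Fs_def by (rule lev_decomp[OF assms])
  note dd = d[unfolded decomp_def]
  have len: "length Fs = 2" using dd[THEN conjunct1] by simp
  have sub: "set Fs \<subseteq> level FF k" using dd[THEN conjunct2, THEN conjunct1] .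
  have un: "\<Union>(set Fs) = F" using dd[THEN conjunct2, THEN conjunct2, THEN conjunct1] .
  have cr: "card (root_of Fs) = rr (Suc k)"
    using dd[THEN conjunct2, THEN conjunct2, THEN conjunct2, THEN conjunct2, THEN conjunct1] .
  have sl: "set_less (root_of Fs) (Fs ! 0 - root_of Fs)"
    using dd[THEN conjunct2, THEN conjunct2, THEN conjunct2, THEN conjunct2, THEN conjunct2, THEN conjunct1] .
  have sl2: "\<forall>i. Suc i < length Fs \<longrightarrow> set_less (Fs ! i - root_of Fs) (Fs ! Suc i - root_of Fs)"
    using dd[THEN conjunct2, THEN conjunct2, THEN conjunct2, THEN conjunct2, THEN conjunct2, THEN conjunct2] .
  have "\<exists>a b. Fs = [a,b]" using len by (auto simp: numeral_2_eq_2 length_Suc_conv)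
  then obtain a b where ab: "Fs = [a,b]" by blast
  have st: "set Fs = {Fs!0, Fs!1}" using ab by simp
  show "pc k F ! 0 \<in> level FF k" "pc k F ! 1 \<in> level FF k"
    using sub st unfolding Fs_def by auto
  show "F = pc k F ! 0 \<union> pc k F ! 1" using un st unfolding Fs_def by simp
  show "root_of (pc k F) = pc k F ! 0 \<inter> pc k F ! 1" by (simp add: root_of_def)
  show "card (root_of (pc k F)) = rr (Suc k)" using cr unfolding Fs_def .
  show "set_less (root_of (pc k F)) (pc k F ! 0 - root_of (pc k F))" using sl unfolding Fs_def .
  show "set_less (pc k F ! 0 - root_of (pc k F)) (pc k F ! 1 - root_of (pc k F))"
    using sl2[rule_format, of 0] len unfolding Fs_def by simp
qed

lemma down: "\<forall>F x. F \<in> level FF j \<longrightarrow> k \<le> j \<longrightarrow> x \<in> F \<longrightarrow> (\<exists>H\<in>level FF k. H \<subseteq> F \<and> x \<in> H)"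
proof (induction j)
  case 0 then show ?case by auto
next
  case (Suc j)
  show ?case
  proof (intro allI impI)
    fix F x assume F: "F \<in> level FF (Suc j)" and k: "k \<le> Suc j" and x: "x \<in> F"
    show "\<exists>H\<in>level FF k. H \<subseteq> F \<and> x \<in> H"
    proof (cases "k = Suc j")
      case True then show ?thesis using F x by blast
    next
      case False
      then have kj: "k \<le> j" using k by simp
      have "x \<in> pc j F ! 0 \<or> x \<in> pc j F ! 1" using pc_facts(3)[OF F] x by auto
      then obtain P where P: "P \<in> level FF j" "P \<subseteq> F" "x \<in> P"
      proof
        assume "x \<in> pc j F ! 0" then show ?thesis using that[of "pc j F ! 0"] pc_facts(1,3)[OF F] by auto
      next
        assume "x \<in> pc j F ! 1" then show ?thesis using that[of "pc j F ! 1"] pc_facts(2,3)[OF F] by auto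
      qed
      obtain H where "H \<in> level FF k" "H \<subseteq> P" "x \<in> H"
        using Suc.IH[rule_format, OF P(1) kj P(3)] by blast
      then show ?thesis using P(2) by blast
    qed
  qed
qed

lemma no_lower:
  assumes F: "F \<in> level FF (Suc k)"
    and x: "x \<in> pc k F ! 0 - root_of (pc k F)" and y: "y \<in> pc k F ! 1 - root_of (pc k F)"
    and E: "E \<in> level FF j" and j: "j \<le> k" and xE: "x \<in> E" and yE: "y \<in> E"
  shows False
proof -
  have xy: "x < y" using pc_facts(7)[OF F] x y unfolding set_less_def by auto
  obtain H where H: "H \<in> level FF j" "H \<subseteq> pc k F ! 1" "y \<in> H"
    using down pc_facts(2)[OF F] j y by blast
  have "initial_in (E \<inter> H) E" using lev_init[OF E H(1)] by simp
  then have "x \<in> H" using xE yE H(3) xy unfolding initial_in_def by auto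
  then have "x \<in> root_of (pc k F)" using H(2) x pc_facts(4)[OF F] by auto
  then show False using x by auto
qed

lemma same_pos:
  assumes "E \<in> level FF k" "F \<in> level FF k" "x \<in> E" "x \<in> F"
  shows "pos x E = pos x F"
proof -
  have "initial_in (E \<inter> F) E" "initial_in (E \<inter> F) F" using lev_init[OF assms(1,2)] by auto
  then have "{y\<in>E. y < x} = {y\<in>F. y < x}" using assms(3,4) unfolding initial_in_def by blast
  then show ?thesis unfolding pos_def by simp
qed

lemma wit_excl:
  assumes "wit True FF x y" "wit False FF x y"
  shows False
proof -
  obtain k1 F where F: "F \<in> level FF (Suc k1)" 
    "x \<in> pc k1 F ! 0 - root_of (pc k1 F)" "y \<in> pc k1 F ! 1 - root_of (pc k1 F)"
    "pos x F + (mm k1 - rr (Suc k1)) < pos y F"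
    using assms(1) unfolding wit_def by auto
  obtain k2 G where G: "G \<in> level FF (Suc k2)" 
    "x \<in> pc k2 G ! 0 - root_of (pc k2 G)" "y \<in> pc k2 G ! 1 - root_of (pc k2 G)"
    "pos y G < pos x G + (mm k2 - rr (Suc k2))"
    using assms(2) unfolding wit_def by auto
  have xF: "x \<in> F" "y \<in> F" using F pc_facts(3)[OF F(1)] by auto
  have xG: "x \<in> G" "y \<in> G" using G pc_facts(3)[OF G(1)] by auto
  consider "k1 < k2" | "k2 < k1" | "k1 = k2" by linarith
  then show False
  proof cases
    case 1
    then have "Suc k1 \<le> k2" by simp
    then show False using no_lower[OF G(1,2,3) F(1) _ xF(1) xF(2)] by simp
  next
    case 2
    then have "Suc k2 \<le> k1" by simp
    then show False using no_lower[OF F(1,2,3) G(1) _ xG(1) xG(2)] by simp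
  next
    case 3
    have G1: "G \<in> level FF (Suc k1)" using G(1) 3 by simp
    have "pos x F = pos x G" "pos y F = pos y G"
      using same_pos[OF F(1) G1] xF xG by auto
    then show False using F(4) G(4) 3 by simp
  qed
qed

end




context sch
begin

lemma capt:
  assumes F: "F \<in> level FF (Suc k)"
    and c0: "c0 \<subseteq> pc k F ! 0" and c1: "c1 \<subseteq> pc k F ! 1" and dj: "c0 \<inter> c1 = {}"
    and ne: "c0 - root_of (pc k F) \<noteq> {}"
    and bij: "bij_betw \<phi> (pc k F ! 0) (pc k F ! 1)" and sm: "strict_mono_on (pc k F ! 0) \<phi>"
    and im: "\<phi> ` c0 = c1"
  shows "c0 \<inter> root_of (pc k F) = {}" "c1 \<inter> root_of (pc k F) = {}"
    "\<forall>\<beta>\<in>c0. pos (\<phi> \<beta>) F = pos \<beta> F + (mm k - rr (Suc k))"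
proof -
  define F0 where "F0 = pc k F ! 0"
  define F1 where "F1 = pc k F ! 1"
  define R where "R = root_of (pc k F)"
  have L0: "F0 \<in> level FF k" and L1: "F1 \<in> level FF k" unfolding F0_def F1_def using pc_facts[OF F] by auto
  have fin0: "finite F0" and fin1: "finite F1" using lev_fin L0 L1 by auto
  have FU: "F = F0 \<union> F1" unfolding F0_def F1_def using pc_facts(3)[OF F] .
  have RI: "R = F0 \<inter> F1" unfolding F0_def F1_def R_def using pc_facts(4)[OF F] .
  have s0: "set_less R (F0 - R)" unfolding F0_def R_def using pc_facts(6)[OF F] .
  have s01: "set_less (F0 - R) (F1 - R)" unfolding F0_def F1_def R_def using pc_facts(7)[OF F] .
  have cR: "card R = rr (Suc k)" unfolding R_def using pc_facts(5)[OF F] .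
  have cF0: "card F0 = mm k" using lev_card[OF L0] .
  obtain z where z: "z \<in> c0" "z \<notin> R" using ne unfolding R_def by auto
  have zF: "z \<in> F0 - R" using z c0 unfolding F0_def by auto
  have R1: "x < y" if "x \<in> R" "y \<in> F1 - R" for x y
  proof -
    have "x < z" using s0 that(1) zF unfolding set_less_def by auto
    also have "z < y" using s01 zF that(2) unfolding set_less_def by auto
    finally show ?thesis .
  qed
  have p0: "{y\<in>F0. y < x} = {y\<in>R. y < x}" if "x \<in> R" for x
  proof -
    have "y \<in> R" if "y \<in> F0" "y < x" for y
    proof (rule ccontr)
      assume "y \<notin> R"
      then have "x < y" using s0 \<open>x \<in> R\<close> that(1) unfolding set_less_def by auto
      then show False using that(2) by simp
    qed
    then show ?thesis using RI by auto
  qed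
  have p1: "{y\<in>F1. y < x} = {y\<in>R. y < x}" if "x \<in> R" for x
  proof -
    have "y \<in> R" if "y \<in> F1" "y < x" for y
    proof (rule ccontr)
      assume "y \<notin> R"
      then have "x < y" using R1 \<open>x \<in> R\<close> that(1) by auto
      then show False using that(2) by simp
    qed
    then show ?thesis using RI by auto
  qed
  have bij': "bij_betw \<phi> F0 F1" and sm': "strict_mono_on F0 \<phi>" using bij sm unfolding F0_def F1_def by auto
  have fixR: "\<phi> x = x" if x: "x \<in> R" for x
  proof -
    have xF0: "x \<in> F0" and xF1: "x \<in> F1" using x RI by auto
    have "pos (\<phi> x) F1 = pos x F0" by (rule pos_bij[OF sm' bij' xF0])
    also have "\<dots> = pos x F1" unfolding pos_def using p0[OF x] p1[OF x] by simp
    finally have eq: "pos (\<phi> x) F1 = pos x F1" .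
    have phx: "\<phi> x \<in> F1" using bij' xF0 by (auto simp: bij_betw_def)
    show ?thesis
    proof (rule ccontr)
      assume "\<phi> x \<noteq> x"
      then have "\<phi> x < x \<or> x < \<phi> x" by auto
      then show False using pos_mono[OF fin1 phx xF1] pos_mono[OF fin1 xF1 phx] eq by auto
    qed
  qed
  show A: "c0 \<inter> root_of (pc k F) = {}"
  proof (rule ccontr)
    assume "c0 \<inter> root_of (pc k F) \<noteq> {}"
    then obtain x where x: "x \<in> c0" "x \<in> R" unfolding R_def by auto
    then have "\<phi> x \<in> c1" using im by auto
    then have "x \<in> c1" using fixR[OF x(2)] by simp
    then show False using dj x(1) by auto
  qed
  show "c1 \<inter> root_of (pc k F) = {}"
  proof (rule ccontr)
    assume "c1 \<inter> root_of (pc k F) \<noteq> {}"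
    then obtain y where y: "y \<in> c1" "y \<in> R" unfolding R_def by auto
    then obtain x where x: "x \<in> c0" "y = \<phi> x" using im by auto
    have "\<phi> y = y" using fixR[OF y(2)] .
    have "x \<in> F0" "y \<in> F0" using x c0 y RI unfolding F0_def by auto
    then have "x = y" using \<open>\<phi> y = y\<close> x(2) bij' unfolding bij_betw_def inj_on_def by metis
    then show False using A x y unfolding R_def by auto
  qed
  show "\<forall>\<beta>\<in>c0. pos (\<phi> \<beta>) F = pos \<beta> F + (mm k - rr (Suc k))"
  proof
    fix \<beta> assume b: "\<beta> \<in> c0"
    have bR: "\<beta> \<in> F0 - R" using b A c0 unfolding F0_def R_def by auto
    have gc1: "\<phi> \<beta> \<in> c1" using im b by auto
    have gR: "\<phi> \<beta> \<in> F1" "\<phi> \<beta> \<notin> R"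
    proof -
      show "\<phi> \<beta> \<in> F1" using gc1 c1 unfolding F1_def by auto
      show "\<phi> \<beta> \<notin> R"
      proof
        assume "\<phi> \<beta> \<in> R"
        have "\<phi> (\<phi> \<beta>) = \<phi> \<beta>" using fixR[OF \<open>\<phi> \<beta> \<in> R\<close>] .
        have "\<phi> \<beta> \<in> F0" using \<open>\<phi> \<beta> \<in> R\<close> RI by auto
        then have "\<phi> \<beta> = \<beta>" using \<open>\<phi> (\<phi> \<beta>) = \<phi> \<beta>\<close> bR bij' unfolding bij_betw_def inj_on_def by blast
        then show False using \<open>\<phi> \<beta> \<in> R\<close> bR by auto
      qed
    qed
    have e1: "{y\<in>F. y < \<beta>} = {y\<in>F0. y < \<beta>}"
    proof -
      have "y \<in> F0" if "y \<in> F1" "y < \<beta>" for y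
      proof (rule ccontr)
        assume "y \<notin> F0"
        then have "y \<in> F1 - R" using that RI by auto
        then have "\<beta> < y" using s01 bR unfolding set_less_def by auto
        then show False using that(2) by simp
      qed
      then show ?thesis using FU by auto
    qed
    have e2: "{y\<in>F. y < \<phi> \<beta>} = (F0 - R) \<union> {y\<in>F1. y < \<phi> \<beta>}"
    proof
      show "{y\<in>F. y < \<phi> \<beta>} \<subseteq> (F0 - R) \<union> {y\<in>F1. y < \<phi> \<beta>}" using FU RI by auto
      have "y < \<phi> \<beta>" if "y \<in> F0 - R" for y using s01 that gR unfolding set_less_def by auto
      then show "(F0 - R) \<union> {y\<in>F1. y < \<phi> \<beta>} \<subseteq> {y\<in>F. y < \<phi> \<beta>}" using FU by auto
    qed
    have dj2: "(F0 - R) \<inter> {y\<in>F1. y < \<phi> \<beta>} = {}" using RI by auto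
    have "pos (\<phi> \<beta>) F = card (F0 - R) + card {y\<in>F1. y < \<phi> \<beta>}"
      unfolding pos_def e2 using fin0 fin1 dj2 by (simp add: card_Un_disjoint)
    also have "card (F0 - R) = mm k - rr (Suc k)"
    proof -
      have "R \<subseteq> F0" using RI by auto
      then show ?thesis using card_Diff_subset[OF finite_subset[OF \<open>R \<subseteq> F0\<close> fin0] \<open>R \<subseteq> F0\<close>] cF0 cR by simp
    qed
    also have "card {y\<in>F1. y < \<phi> \<beta>} = pos \<beta> F0"
      using pos_bij[OF sm' bij', of \<beta>] bR unfolding pos_def by auto
    also have "pos \<beta> F0 = pos \<beta> F" unfolding pos_def e1 ..
    finally show "pos (\<phi> \<beta>) F = pos \<beta> F + (mm k - rr (Suc k))" by simp
  qed
qed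

end




definition Pb :: "'a::linorder set set \<Rightarrow> bool \<Rightarrow> 'a set set" where
  "Pb FF b = {x. finite x \<and> (\<forall>\<alpha>\<in>x. \<forall>\<gamma>\<in>x. \<alpha> < \<gamma> \<longrightarrow> wit b FF \<alpha> \<gamma>)}"

lemma union_P:
  assumes "p \<in> Pb FF b" "q \<in> Pb FF b"
    and "\<forall>\<alpha>\<in>p. \<forall>\<gamma>\<in>q. \<alpha> < \<gamma> \<longrightarrow> wit b FF \<alpha> \<gamma>"
    and "\<forall>\<alpha>\<in>q. \<forall>\<gamma>\<in>p. \<alpha> < \<gamma> \<longrightarrow> wit b FF \<alpha> \<gamma>"
  shows "p \<union> q \<in> Pb FF b"
  using assms unfolding Pb_def by auto

lemma ccc_P:
  fixes FF :: "'a::wellorder set set"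
  assumes sch: "sch FF" and om: "\<forall>x::'a. countable {y. y < x}"
    and capH: "capturing 2 (\<lambda>_. 2) rr FF"
  shows "ccc (Pb FF b) (\<lambda>p q. q \<subseteq> p)"
  unfolding ccc_def
proof (intro allI impI)
  interpret sch FF by (rule sch)
  fix A assume anti: "antichain (Pb FF b) (\<lambda>p q. q \<subseteq> p) A"
  have AP: "A \<subseteq> Pb FF b" using anti unfolding antichain_def by simp
  have inc: "\<not> compatible (Pb FF b) (\<lambda>p q. q \<subseteq> p) p q" if "p \<in> A" "q \<in> A" "p \<noteq> q" for p q
    using anti that unfolding antichain_def by blast
  have finA: "finite a" if "a \<in> A" for a using AP that unfolding Pb_def by auto
  show "countable A"
  proof (rule ccontr)
    assume unc: "uncountable A"
    obtain k0 where k0: "uncountable {a\<in>A. card a = k0}" using pigeon[OF unc] by blast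
    define A1 where "A1 = {a\<in>A. card a = k0}"
    have A1f: "\<forall>a\<in>A1. finite a \<and> card a = k0" unfolding A1_def using finA by auto
    have "\<exists>D A'. A' \<subseteq> A1 \<and> uncountable A' \<and> (\<forall>a\<in>A'. \<forall>b\<in>A'. a \<noteq> b \<longrightarrow> a \<inter> b = D)"
      using mp[OF mp[OF spec[OF delta, of A1] A1f]] k0 unfolding A1_def by blast
    then obtain D A2 where A2: "A2 \<subseteq> A1" "uncountable A2" and A2d: "\<forall>a\<in>A2. \<forall>b\<in>A2. a \<noteq> b \<longrightarrow> a \<inter> b = D"
      by blast
    define A3 where "A3 = A2 - {D}"
    have uA3: "uncountable A3"
    proof
      assume "countable A3"
      then have "countable (insert D A3)" by simp
      moreover have "A2 \<subseteq> insert D A3" unfolding A3_def by auto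
      ultimately show False using A2(2) countable_subset by blast
    qed
    have A3A: "A3 \<subseteq> A" using A2(1) unfolding A3_def A1_def by auto
    have A3c: "\<forall>a\<in>A3. finite a \<and> card a = k0" using A2(1) A1f unfolding A3_def by auto
    have DA: "D \<subseteq> a" if a: "a \<in> A3" for a
    proof -
      have "\<not> A3 \<subseteq> {a}" using uA3 countable_subset by (metis countable_finite finite.emptyI finite_insert)
      then obtain b where b: "b \<in> A3" "b \<noteq> a" by auto
      then have "a \<inter> b = D" using A2d a unfolding A3_def by auto
      then show ?thesis by auto
    qed
    have aD: "a \<noteq> D" if "a \<in> A3" for a using that unfolding A3_def by auto
    have finD: "finite D"
    proof -
      have "A3 \<noteq> {}" using uA3 by auto
      then obtain a where "a \<in> A3" by auto
      then show ?thesis using DA[of a] A3c finite_subset by blast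
    qed
    define T where "T = (\<lambda>a. a - D) ` A3"
    have injT: "inj_on (\<lambda>a. a - D) A3"
    proof (rule inj_onI)
      fix a a' assume "a \<in> A3" "a' \<in> A3" "a - D = a' - D"
      then show "a = a'" using DA[of a] DA[of a'] by (metis Diff_partition)
    qed
    have uT: "uncountable T" unfolding T_def using uA3 injT countable_image_inj_on by blast
    have Tprop: "finite u \<and> u \<noteq> {} \<and> u \<inter> D = {} \<and> u \<union> D \<in> A \<and> card u = k0 - card D" if u: "u \<in> T" for u
    proof -
      obtain a where a: "a \<in> A3" "u = a - D" using u unfolding T_def by auto
      have "D \<subseteq> a" using DA a(1) .
      then have "u \<union> D = a" using a(2) by auto
      moreover have "u \<noteq> {}" using \<open>D \<subseteq> a\<close> aD[OF a(1)] a(2) by auto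
      moreover have "card u = k0 - card D" using a A3c \<open>D \<subseteq> a\<close> finD by (simp add: card_Diff_subset)
      ultimately show ?thesis using a A3A A3c by auto
    qed
    have pdT: "pdisj T" unfolding pdisj_def
    proof (intro ballI impI)
      fix u u' assume "u \<in> T" "u' \<in> T" "u \<noteq> u'"
      then obtain a a' where "a \<in> A3" "a' \<in> A3" "u = a - D" "u' = a' - D" "a \<noteq> a'" unfolding T_def by auto
      then have "a \<inter> a' = D" using A2d unfolding A3_def by auto
      then show "u \<inter> u' = {}" using \<open>u = a - D\<close> \<open>u' = a' - D\<close> by auto
    qed
    have finT: "\<forall>t\<in>T. finite t" and neT: "\<forall>t\<in>T. t \<noteq> {}" using Tprop by auto
    obtain g S where g: "\<forall>u\<in>T. g u \<in> T \<and> set_less u (g u)"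
      and S: "S \<subseteq> (\<lambda>u. u \<union> g u) ` T" "uncountable S" "pdisj S"
      using pairs[OF om uT pdT finT neT] by blast
    have Sfin: "S \<subseteq> {A. finite A}"
    proof
      fix s assume "s \<in> S"
      then obtain u where u: "u \<in> T" "s = u \<union> g u" using S(1) by auto
      have "g u \<in> T" using g u(1) by blast
      then have "finite u" "finite (g u)" using finT u(1) by auto
      then show "s \<in> {A. finite A}" using u(2) by simp
    qed
    have "\<forall>k. \<exists>C l F. C \<subseteq> S \<and> finite C \<and> card C = 2 \<and> k < l \<and> F \<in> level FF l \<and> captures (\<lambda>_. 2) rr FF l F C"
      using mp[OF spec[OF capH[unfolded capturing_def], of S] conjI[OF Sfin S(2)]] .
    then have "\<exists>C l F. C \<subseteq> S \<and> finite C \<and> card C = 2 \<and> 0 < l \<and> F \<in> level FF l \<and> captures (\<lambda>_. 2) rr FF l F C"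
      by (rule spec)
    then obtain C l F where C: "C \<subseteq> S" "card C = 2" "0 < l" "F \<in> level FF l" and cap: "captures (\<lambda>_. 2) rr FF l F C"
      by blast
    obtain k where lk: "l = Suc k" using C(3) gr0_conv_Suc by auto
    have FL: "F \<in> level FF (Suc k)" using C(4) lk by simp
    define R where "R = root_of (pc k F)"
    obtain c where cb: "bij_betw c {..<2} C"
      and cc: "\<forall>i<2. c i \<subseteq> pc k F ! i \<and> c i - R \<noteq> {} \<and>
          (\<exists>\<phi>. bij_betw \<phi> (pc k F ! 0) (pc k F ! i) \<and> strict_mono_on (pc k F ! 0) \<phi> \<and> \<phi> ` (c 0) = c i)"
      using cap C(2) unfolding captures_def Let_def lk R_def by auto
    have c0S: "c 0 \<in> S" and c1S: "c 1 \<in> S" using cb C(1) unfolding bij_betw_def by auto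
    have c01: "c 0 \<noteq> c 1"
    proof
      assume "c 0 = c 1"
      moreover have "inj_on c {..<2}" using cb unfolding bij_betw_def by simp
      ultimately have "(0::nat) = 1" using inj_onD[of c "{..<2}" 0 1] by simp
      then show False by simp
    qed
    have dj: "c 0 \<inter> c 1 = {}" using S(3) c0S c1S c01 unfolding pdisj_def by auto
    have c0F: "c 0 \<subseteq> pc k F ! 0" and c1F: "c 1 \<subseteq> pc k F ! 1" and ne: "c 0 - R \<noteq> {}" using cc by auto
    obtain \<phi> where phi: "bij_betw \<phi> (pc k F ! 0) (pc k F ! 1)" "strict_mono_on (pc k F ! 0) \<phi>" "\<phi> ` (c 0) = c 1"
      using cc[rule_format, of 1] by auto
    note cf = capt[OF FL c0F c1F dj ne[unfolded R_def] phi]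
    obtain u0 where u0: "u0 \<in> T" "c 0 = u0 \<union> g u0" using c0S S(1) by auto
    obtain u1 where u1: "u1 \<in> T" "c 1 = u1 \<union> g u1" using c1S S(1) by auto
    have smc: "strict_mono_on (u0 \<union> g u0) \<phi>"
      using phi(2) c0F u0(2) by (metis monotone_on_subset)
    have sp: "\<phi> ` u0 = u1" "\<phi> ` g u0 = g u1"
      using split_map[of u0 "g u0" u1 "g u1" \<phi>] smc phi(3) u0 u1 g Tprop by auto
    have in0: "x \<in> pc k F ! 0 - R" if "x \<in> c 0" for x using that c0F cf(1) unfolding R_def by auto
    have in1: "x \<in> pc k F ! 1 - R" if "x \<in> c 1" for x using that c1F cf(2) unfolding R_def by auto
    have ord01: "x < y" if "x \<in> c 0" "y \<in> c 1" for x y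
      using pc_facts(7)[OF FL] in0[OF that(1)] in1[OF that(2)] unfolding set_less_def R_def by auto
    have finF: "finite F" using lev_fin[OF FL] .
    have F0sub: "pc k F ! 0 \<subseteq> F" using pc_facts(3)[OF FL] by auto
    have witc: "wit b FF x (\<phi> \<beta>)"
      if x: "x \<in> c 0" and bt: "\<beta> \<in> c 0" and o1: "b \<longrightarrow> x < \<beta>" and o2: "\<not> b \<longrightarrow> \<beta> < x" for x \<beta>
    proof -
      have pe: "pos (\<phi> \<beta>) F = pos \<beta> F + (mm k - rr (Suc k))" using cf(3) bt by auto
      have xF: "x \<in> F" and bF: "\<beta> \<in> F" using x bt c0F F0sub by auto
      have yc: "\<phi> \<beta> \<in> c 1" using bt phi(3) by auto
      have cmp: "if b then pos x F + (mm k - rr (Suc k)) < pos (\<phi> \<beta>) F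
                 else pos (\<phi> \<beta>) F < pos x F + (mm k - rr (Suc k))"
      proof (cases b)
        case True
        then have "pos x F < pos \<beta> F" using o1 pos_mono[OF finF xF bF] by auto
        then show ?thesis using True pe by simp
      next
        case False
        then have "pos \<beta> F < pos x F" using o2 pos_mono[OF finF bF xF] by auto
        then show ?thesis using False pe by simp
      qed
      show ?thesis unfolding wit_def
        using FL in0[OF x] in1[OF yc] cmp unfolding R_def by blast
    qed
    have cneq: "v \<union> D \<noteq> w \<union> D" if "v \<in> T" "w \<in> T" "v \<noteq> w" for v w
    proof
      assume "v \<union> D = w \<union> D"
      then have "(v \<union> D) - D = (w \<union> D) - D" by simp
      then have "v = w" using Tprop[OF that(1)] Tprop[OF that(2)] by auto
      then show False using that(3) by simp
    qed
    have gT0: "g u0 \<in> T" and gT1: "g u1 \<in> T" using g u0(1) u1(1) by auto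
    have sl0: "set_less u0 (g u0)" and sl1: "set_less u1 (g u1)" using g u0(1) u1(1) by auto
    show False
    proof (cases b)
      case True
      define p where "p = u0 \<union> D"
      define q where "q = g u1 \<union> D"
      have pA: "p \<in> A" and qA: "q \<in> A" using Tprop u0(1) gT1 unfolding p_def q_def by auto
      have pP: "p \<in> Pb FF b" and qP: "q \<in> Pb FF b" using pA qA AP by auto
      have "u0 \<noteq> g u1" using dj u0 u1 Tprop[OF u0(1)] by auto
      then have pq: "p \<noteq> q" unfolding p_def q_def using cneq u0(1) gT1 by auto
      have "p \<union> q \<in> Pb FF b"
      proof (rule union_P[OF pP qP])
        show "\<forall>\<alpha>\<in>p. \<forall>\<gamma>\<in>q. \<alpha> < \<gamma> \<longrightarrow> wit b FF \<alpha> \<gamma>"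
        proof (intro ballI impI)
          fix \<alpha> \<gamma> assume a: "\<alpha> \<in> p" and g': "\<gamma> \<in> q" and lt: "\<alpha> < \<gamma>"
          show "wit b FF \<alpha> \<gamma>"
          proof (cases "\<alpha> \<in> D \<or> \<gamma> \<in> D")
            case True
            then have "(\<alpha> \<in> q \<and> \<gamma> \<in> q) \<or> (\<alpha> \<in> p \<and> \<gamma> \<in> p)" using a g' unfolding p_def q_def by auto
            then show ?thesis using pP qP lt unfolding Pb_def by auto
          next
            case False
            then have "\<alpha> \<in> u0" "\<gamma> \<in> g u1" using a g' unfolding p_def q_def by auto
            then obtain \<beta> where bt: "\<beta> \<in> g u0" "\<gamma> = \<phi> \<beta>" using sp(2) by auto
            have "\<alpha> < \<beta>" using sl0 \<open>\<alpha> \<in> u0\<close> bt(1) unfolding set_less_def by auto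
            then show ?thesis using witc[of \<alpha> \<beta>] \<open>\<alpha> \<in> u0\<close> bt u0(2) True by auto
          qed
        qed
        show "\<forall>\<alpha>\<in>q. \<forall>\<gamma>\<in>p. \<alpha> < \<gamma> \<longrightarrow> wit b FF \<alpha> \<gamma>"
        proof (intro ballI impI)
          fix \<alpha> \<gamma> assume a: "\<alpha> \<in> q" and g': "\<gamma> \<in> p" and lt: "\<alpha> < \<gamma>"
          show "wit b FF \<alpha> \<gamma>"
          proof (cases "\<alpha> \<in> D \<or> \<gamma> \<in> D")
            case True
            then have "(\<alpha> \<in> q \<and> \<gamma> \<in> q) \<or> (\<alpha> \<in> p \<and> \<gamma> \<in> p)" using a g' unfolding p_def q_def by auto
            then show ?thesis using pP qP lt unfolding Pb_def by auto
          next
            case False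
            then have "\<alpha> \<in> c 1" "\<gamma> \<in> c 0" using a g' u0(2) u1(2) unfolding p_def q_def by auto
            then have "\<gamma> < \<alpha>" using ord01 by auto
            then show ?thesis using lt by simp
          qed
        qed
      qed
      then have "compatible (Pb FF b) (\<lambda>p q. q \<subseteq> p) p q" unfolding compatible_def by blast
      then show False using inc[OF pA qA pq] by simp
    next
      case False
      define p where "p = g u0 \<union> D"
      define q where "q = u1 \<union> D"
      have pA: "p \<in> A" and qA: "q \<in> A" using Tprop gT0 u1(1) unfolding p_def q_def by auto
      have pP: "p \<in> Pb FF b" and qP: "q \<in> Pb FF b" using pA qA AP by auto
      have "g u0 \<noteq> u1" using dj u0 u1 Tprop[OF u1(1)] by auto
      then have pq: "p \<noteq> q" unfolding p_def q_def using cneq gT0 u1(1) by auto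
      have "p \<union> q \<in> Pb FF b"
      proof (rule union_P[OF pP qP])
        show "\<forall>\<alpha>\<in>p. \<forall>\<gamma>\<in>q. \<alpha> < \<gamma> \<longrightarrow> wit b FF \<alpha> \<gamma>"
        proof (intro ballI impI)
          fix \<alpha> \<gamma> assume a: "\<alpha> \<in> p" and g': "\<gamma> \<in> q" and lt: "\<alpha> < \<gamma>"
          show "wit b FF \<alpha> \<gamma>"
          proof (cases "\<alpha> \<in> D \<or> \<gamma> \<in> D")
            case True
            then have "(\<alpha> \<in> q \<and> \<gamma> \<in> q) \<or> (\<alpha> \<in> p \<and> \<gamma> \<in> p)" using a g' unfolding p_def q_def by auto
            then show ?thesis using pP qP lt unfolding Pb_def by auto
          next
            case False
            then have "\<alpha> \<in> g u0" "\<gamma> \<in> u1" using a g' unfolding p_def q_def by auto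
            then obtain \<beta> where bt: "\<beta> \<in> u0" "\<gamma> = \<phi> \<beta>" using sp(1) by auto
            have "\<beta> < \<alpha>" using sl0 \<open>\<alpha> \<in> g u0\<close> bt(1) unfolding set_less_def by auto
            then show ?thesis using witc[of \<alpha> \<beta>] \<open>\<alpha> \<in> g u0\<close> bt u0(2) \<open>\<not> b\<close> by auto
          qed
        qed
        show "\<forall>\<alpha>\<in>q. \<forall>\<gamma>\<in>p. \<alpha> < \<gamma> \<longrightarrow> wit b FF \<alpha> \<gamma>"
        proof (intro ballI impI)
          fix \<alpha> \<gamma> assume a: "\<alpha> \<in> q" and g': "\<gamma> \<in> p" and lt: "\<alpha> < \<gamma>"
          show "wit b FF \<alpha> \<gamma>"
          proof (cases "\<alpha> \<in> D \<or> \<gamma> \<in> D")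
            case True
            then have "(\<alpha> \<in> q \<and> \<gamma> \<in> q) \<or> (\<alpha> \<in> p \<and> \<gamma> \<in> p)" using a g' unfolding p_def q_def by auto
            then show ?thesis using pP qP lt unfolding Pb_def by auto
          next
            case False
            then have "\<alpha> \<in> c 1" "\<gamma> \<in> c 0" using a g' u0(2) u1(2) unfolding p_def q_def by auto
            then have "\<gamma> < \<alpha>" using ord01 by auto
            then show ?thesis using lt by simp
          qed
        qed
      qed
      then have "compatible (Pb FF b) (\<lambda>p q. q \<subseteq> p) p q" unfolding compatible_def by blast
      then show False using inc[OF pA qA pq] by simp
    qed
  qed
qed




theorem mainTheorem12:
  assumes "omega1_type TYPE('a::wellorder)"
    and "CA 2 TYPE('a)"
  shows "\<exists>(P::'a set set) leP (Q::'a set set) leQ.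
           is_poset P leP \<and> is_poset Q leQ \<and> ccc P leP \<and> ccc Q leQ \<and>
           \<not> ccc (P \<times> Q) (prod_le leP leQ)"
proof -
  have unc: "uncountable (UNIV::'a set)" and om: "\<forall>x::'a. countable {y. y < x}"
    using assms(1) unfolding omega1_type_def by auto
  have "is_type mm (\<lambda>_. 2) rr \<and> (\<forall>k\<ge>1. (2::nat) \<le> 2)" using type_ok by simp
  then have "\<exists>FF::'a set set. construction_scheme UNIV mm (\<lambda>_. 2) rr FF \<and> capturing 2 (\<lambda>_. 2) rr FF"
    using assms(2) unfolding CA_def by blast
  then obtain FF :: "'a set set" where cs: "construction_scheme UNIV mm (\<lambda>_. 2) rr FF"
    and cp: "capturing 2 (\<lambda>_. 2) rr FF" by blast
  have sch: "sch FF" using cs by (simp add: sch_def)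
  interpret sch FF by (rule sch)
  define le :: "'a set \<Rightarrow> 'a set \<Rightarrow> bool" where "le = (\<lambda>p q. q \<subseteq> p)"
  have po: "is_poset (Pb FF b) le" for b unfolding is_poset_def le_def by auto
  have cc: "ccc (Pb FF b) le" for b unfolding le_def by (rule ccc_P[OF sch om cp])
  have sing: "{\<alpha>} \<in> Pb FF b" for \<alpha> b unfolding Pb_def by auto
  define A where "A = (\<lambda>\<alpha>::'a. ({\<alpha>}, {\<alpha>})) ` UNIV"
  have anti: "antichain (Pb FF False \<times> Pb FF True) (prod_le le le) A"
    unfolding antichain_def
  proof (intro conjI ballI impI)
    show "A \<subseteq> Pb FF False \<times> Pb FF True" unfolding A_def using sing by auto
  next
    fix p q assume p: "p \<in> A" and q: "q \<in> A" and pq: "p \<noteq> q"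
    obtain \<alpha> \<gamma> where a: "p = ({\<alpha>}, {\<alpha>})" "q = ({\<gamma>}, {\<gamma>})" using p q unfolding A_def by auto
    have ag: "\<alpha> \<noteq> \<gamma>" using pq a by auto
    show "\<not> compatible (Pb FF False \<times> Pb FF True) (prod_le le le) p q"
    proof
      assume "compatible (Pb FF False \<times> Pb FF True) (prod_le le le) p q"
      then obtain s1 s2 where s: "s1 \<in> Pb FF False" "s2 \<in> Pb FF True"
        "\<alpha> \<in> s1" "\<gamma> \<in> s1" "\<alpha> \<in> s2" "\<gamma> \<in> s2"
        unfolding compatible_def prod_le_def le_def a by auto
      have w: "wit False FF x y \<and> wit True FF x y" if "x \<in> s1" "y \<in> s1" "x \<in> s2" "y \<in> s2" "x < y" for x y
        using s(1,2) that unfolding Pb_def by auto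
      consider "\<alpha> < \<gamma>" | "\<gamma> < \<alpha>" using ag by fastforce
      then show False
      proof cases
        case 1 then show False using w[of \<alpha> \<gamma>] s wit_excl by blast
      next
        case 2 then show False using w[of \<gamma> \<alpha>] s wit_excl by blast
      qed
    qed
  qed
  have "uncountable A"
  proof
    assume "countable A"
    moreover have "inj_on (\<lambda>\<alpha>::'a. ({\<alpha>}, {\<alpha>})) UNIV" by (auto simp: inj_on_def)
    ultimately have "countable (UNIV::'a set)" unfolding A_def using countable_image_inj_on by blast
    then show False using unc by simp
  qed
  then have "\<not> ccc (Pb FF False \<times> Pb FF True) (prod_le le le)" using anti unfolding ccc_def by blast
  then show ?thesis using po cc by blast
qed



end
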